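(* Let $n\ge 4$ be an integer, let $i,k\in\{1,\ldots,n\}$, and let $H\sim\text{Hyp}(n,i,k)$ be such that $\mathbb{E}(H)\in [1, \min\{i,k\}-2]$ and $\frac{(n-i)(n-k)}{n}>1$. Assume further that $\text{Var}(H)\ge 1$. Then $\mathbb{P}(H\ge \mathbb{E}(H)) \ge 0.049$.
   Context: $\text{Hyp}(n,i,k)$ denotes the hypergeometric distribution: the number of black marbles in a sample without replacement of size $k$ from an urn with $i$ black and $n-i$ white marbles, i.e. $\mathbb{P}(H=j)=\binom{i}{j}\binom{n-i}{k-j}/\binom{n}{k}$. One has $\mathbb{E}(H)=ik/n$ and $\text{Var}(H)=k\cdot\frac{i}{n}\cdot\frac{n-i}{n}\cdot\frac{n-k}{n-1}$. *)

theory Defs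
  imports Complex_Main
begin

text \<open>Hypergeometric distribution Hyp(n,i,k): number of black marbles in a sample of
  size k drawn without replacement from an urn with i black and n-i white marbles.
  Its support is contained in {0..k}.\<close>

definition hyp_pmf :: "nat \<Rightarrow> nat \<Rightarrow> nat \<Rightarrow> nat \<Rightarrow> real" where
  "hyp_pmf n i k j = real ((i choose j) * ((n - i) choose (k - j))) / real (n choose k)"

definition hyp_prob :: "nat \<Rightarrow> nat \<Rightarrow> nat \<Rightarrow> (nat \<Rightarrow> bool) \<Rightarrow> real" where
  "hyp_prob n i k P = (\<Sum>j\<in>{j. j \<le> k \<and> P j}. hyp_pmf n i k j)"

definition hyp_mean :: "nat \<Rightarrow> nat \<Rightarrow> nat \<Rightarrow> real" where
  "hyp_mean n i k = (\<Sum>j\<le>k. real j * hyp_pmf n i k j)"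

definition hyp_var :: "nat \<Rightarrow> nat \<Rightarrow> nat \<Rightarrow> real" where
  "hyp_var n i k = (\<Sum>j\<le>k. (real j - hyp_mean n i k)^2 * hyp_pmf n i k j)"

end

theory Submission
  imports Defs
begin


fun ff :: "nat \<Rightarrow> nat \<Rightarrow> nat" where
  "ff j 0 = 1"
| "ff j (Suc r) = j * ff (j - 1) r"

lemma ff_zero: "j < r \<Longrightarrow> ff j r = 0"
proof (induction r arbitrary: j)
  case 0 then show ?case by simp
next
  case (Suc r)
  show ?case
  proof (cases j)
    case 0 then show ?thesis by simp
  next
    case (Suc j') then show ?thesis using Suc.IH[of j'] Suc.prems by simp
  qed
qed

lemma ff_pos: "r \<le> j \<Longrightarrow> ff j r > 0"
proof (induction r arbitrary: j)
  case 0 then show ?case by simp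
next
  case (Suc r)
  then show ?case using Suc.IH[of "j - 1"] by simp
qed

lemma S_formula:
  "r \<le> k \<Longrightarrow> (\<Sum>j\<le>k. ff j r * (i choose j) * (m choose (k - j))) = ff i r * ((i + m - r) choose (k - r))"
proof (induction r arbitrary: i k)
  case 0
  then show ?case using vandermonde[of i m k] by simp
next
  case (Suc r)
  then obtain k' where k: "k = Suc k'" by (cases k) auto
  have rk: "r \<le> k'" using Suc.prems k by simp
  have "(\<Sum>j\<le>k. ff j (Suc r) * (i choose j) * (m choose (k - j)))
      = (\<Sum>j\<le>k'. ff (Suc j) (Suc r) * (i choose Suc j) * (m choose (k' - j)))"
    unfolding k sum.atMost_Suc_shift by simp
  also have "\<dots> = (\<Sum>j\<le>k'. i * (ff j r * ((i - 1) choose j) * (m choose (k' - j))))"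
  proof (rule sum.cong[OF refl])
    fix j
    have "Suc j * (i choose Suc j) = i * ((i - 1) choose j)" by (rule binomial_absorption)
    moreover have "ff (Suc j) (Suc r) = Suc j * ff j r" by simp
    ultimately show "ff (Suc j) (Suc r) * (i choose Suc j) * (m choose (k' - j)) = i * (ff j r * ((i - 1) choose j) * (m choose (k' - j)))"
      by (metis mult.assoc mult.left_commute)
  qed
  also have "\<dots> = i * (ff (i - 1) r * ((i - 1 + m - r) choose (k' - r)))"
    by (simp add: sum_distrib_left[symmetric] Suc.IH[OF rk])
  also have "\<dots> = ff i (Suc r) * ((i + m - Suc r) choose (k - Suc r))"
    using k by (cases i) (auto simp: algebra_simps)
  finally show ?case .
qed

lemma ff_choose: "r \<le> k \<Longrightarrow> k \<le> n \<Longrightarrow> ff n r * ((n - r) choose (k - r)) = ff k r * (n choose k)"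
proof (induction r arbitrary: n k)
  case 0 then show ?case by simp
next
  case (Suc r)
  then obtain k' where k: "k = Suc k'" by (cases k) auto
  then obtain n' where n: "n = Suc n'" using Suc.prems by (cases n) auto
  have IH: "ff n' r * ((n' - r) choose (k' - r)) = ff k' r * (n' choose k')"
    using Suc.IH[of k' n'] Suc.prems k n by simp
  have ab: "Suc k' * (Suc n' choose Suc k') = Suc n' * (n' choose k')"
    using binomial_absorption[of k' "Suc n'"] by simp
  have "ff n (Suc r) * ((n - Suc r) choose (k - Suc r)) = Suc n' * (ff n' r * ((n' - r) choose (k' - r)))"
    using k n by (simp add: algebra_simps)
  also have "\<dots> = ff k' r * (Suc n' * (n' choose k'))" using IH by (simp add: algebra_simps)
  also have "\<dots> = ff k' r * (Suc k' * (Suc n' choose Suc k'))" using ab by simp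
  also have "\<dots> = ff k (Suc r) * (n choose k)" using k n by (simp del: binomial_Suc_Suc add: algebra_simps)
  finally show ?case .
qed

lemma hyp_ff_moment:
  assumes "i \<le> n" "k \<le> n"
  shows "(\<Sum>j\<le>k. real (ff j r) * hyp_pmf n i k j) = real (ff i r) * real (ff k r) / real (ff n r)"
proof (cases "r \<le> k")
  case True
  have rn: "r \<le> n" using True assms by simp
  have c0: "real (n choose k) > 0" using assms by simp
  have f0: "real (ff n r) > 0" using ff_pos[OF rn] by simp
  have "(\<Sum>j\<le>k. real (ff j r) * hyp_pmf n i k j)
     = real (\<Sum>j\<le>k. ff j r * (i choose j) * ((n - i) choose (k - j))) / real (n choose k)"
    unfolding hyp_pmf_def of_nat_sum sum_divide_distrib by (simp add: mult.assoc)
  also have "\<dots> = real (ff i r * ((n - r) choose (k - r))) / real (n choose k)"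
    using S_formula[OF True, of i "n - i"] assms by simp
  also have "\<dots> = real (ff i r) * real (ff k r) / real (ff n r)"
  proof -
    have e: "real (ff n r) * real ((n - r) choose (k - r)) = real (ff k r) * real (n choose k)"
      using ff_choose[OF True assms(2)] by (metis of_nat_mult)
    show ?thesis using c0 f0 e by (simp add: field_simps)
  qed
  finally show ?thesis .
next
  case False
  then show ?thesis by (simp add: ff_zero)
qed



lemma ff_real: "real (ff j r) = (\<Prod>t<r. (real j - real t))"
proof (induction r arbitrary: j)
  case 0 then show ?case by simp
next
  case (Suc r)
  show ?case
  proof (cases j)
    case 0 then show ?thesis by (auto simp add: prod.lessThan_Suc_shift)
  next
    case (Suc j')
    then show ?thesis using Suc.IH[of j'] by (simp del: prod.lessThan_Suc add: prod.lessThan_Suc_shift algebra_simps)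
  qed
qed

lemma ff_real_1: "real (ff j 1) = real j" by (simp add: ff_real)
lemma ff_real_2: "real (ff j 2) = real j * (real j - 1)"
  by (subst ff_real) (simp add: eval_nat_numeral prod.lessThan_Suc algebra_simps)
lemma ff_real_3: "real (ff j 3) = real j * (real j - 1) * (real j - 2)"
  by (subst ff_real) (simp add: eval_nat_numeral prod.lessThan_Suc algebra_simps)
lemma ff_real_4: "real (ff j 4) = real j * (real j - 1) * (real j - 2) * (real j - 3)"
  by (subst ff_real) (simp add: eval_nat_numeral prod.lessThan_Suc algebra_simps)

lemma poly_identity:
  fixes N I K :: real
  shows "I*(I-1)*(I-2)*(I-3)*(K*(K-1)*(K-2)*(K-3))*N^3*(N-1)
   + (6*N-4*(I*K))*(I*(I-1)*(I-2)*(K*(K-1)*(K-2)))*N^2*(N-1)*(N-3)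
   + (7*N^2-12*(I*K)*N+6*(I*K)^2)*(I*(I-1)*(K*(K-1)))*N*(N-1)*(N-2)*(N-3)
   + (N^3-4*(I*K)*N^2+6*(I*K)^2*N-4*(I*K)^3)*(I*K)*(N-2)*(N-3)*(N-1)^2
   + (I*K)^4*(N-1)^2*(N-2)*(N-3)
   = (3*N^2+15*N-18)*(I*K*(N-I)*(N-K))^2 + (N^2+N-6*I*(N-I)-6*K*(N-K))*(I*K*(N-I)*(N-K))*N^2*(N-1)"
  by (simp add: algebra_simps eval_nat_numeral)

lemma moment_identity:
  fixes N I K :: real
  assumes "N \<ge> 4"
  defines "mu \<equiv> I * K / N"
  defines "m2 \<equiv> I*(I-1)*(K*(K-1)) / (N*(N-1))"
  defines "m3 \<equiv> I*(I-1)*(I-2)*(K*(K-1)*(K-2)) / (N*(N-1)*(N-2))"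
  defines "m4 \<equiv> I*(I-1)*(I-2)*(I-3)*(K*(K-1)*(K-2)*(K-3)) / (N*(N-1)*(N-2)*(N-3))"
  defines "s \<equiv> m2 + (1 - 2*mu) * mu + mu^2"
  defines "c4 \<equiv> m4 + (6 - 4*mu) * m3 + (7 - 12*mu + 6*mu^2) * m2 + (1 - 4*mu + 6*mu^2 - 4*mu^3) * mu + mu^4"
  shows "s = I*K*(N-I)*(N-K) / (N^2*(N-1))"
    and "c4 * ((N-2)*(N-3)) = (3*N^2+15*N-18)*s^2 + (N^2+N-6*I*(N-I)-6*K*(N-K))*s"
proof -
  have n0: "N \<noteq> 0" "N - 1 \<noteq> 0" "N - 2 \<noteq> 0" "N - 3 \<noteq> 0" using assms(1) by auto
  have sa: "m2 * (N^2*(N-1)) = I*(I-1)*(K*(K-1))*N"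
    unfolding m2_def using n0 by (simp add: field_simps power2_eq_square)
  have sb: "(1 - 2*mu) * mu * (N^2*(N-1)) = (N - 2*I*K)*(I*K)*(N-1)"
    unfolding mu_def using n0 by (simp add: field_simps power2_eq_square)
  have sc: "mu^2 * (N^2*(N-1)) = (I*K)^2*(N-1)"
    unfolding mu_def using n0 by (simp add: field_simps power2_eq_square)
  have "s * (N^2*(N-1)) = m2 * (N^2*(N-1)) + (1 - 2*mu) * mu * (N^2*(N-1)) + mu^2 * (N^2*(N-1))"
    unfolding s_def by (simp add: algebra_simps)
  also have "\<dots> = I*K*(N-I)*(N-K)" unfolding sa sb sc by (simp add: algebra_simps power2_eq_square)
  finally show s: "s = I*K*(N-I)*(N-K) / (N^2*(N-1))" using n0 by (simp add: field_simps)
  define D where "D = N^4*(N-1)^2"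
  have D0: "D \<noteq> 0" unfolding D_def using n0 by simp
  have emu: "mu*N = I*K" unfolding mu_def using n0 by simp
  have e2: "m2*(N*(N-1)) = I*(I-1)*(K*(K-1))" unfolding m2_def using n0 by simp
  have e3: "m3*(N*(N-1)*(N-2)) = I*(I-1)*(I-2)*(K*(K-1)*(K-2))" unfolding m3_def using n0 by simp
  have e4: "m4*(N*(N-1)*(N-2)*(N-3)) = I*(I-1)*(I-2)*(I-3)*(K*(K-1)*(K-2)*(K-3))" unfolding m4_def using n0 by simp
  have es: "s*(N^2*(N-1)) = I*K*(N-I)*(N-K)" using s n0 by simp
  have P4: "m4*((N-2)*(N-3))*D = I*(I-1)*(I-2)*(I-3)*(K*(K-1)*(K-2)*(K-3))*N^3*(N-1)"
  proof -
    have "m4*((N-2)*(N-3))*D = (m4*(N*(N-1)*(N-2)*(N-3)))*N^3*(N-1)"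
      unfolding D_def by (simp add: algebra_simps eval_nat_numeral)
    then show ?thesis unfolding e4 .
  qed
  have P3: "(6 - 4*mu) * m3*((N-2)*(N-3))*D = (6*N-4*(I*K))*(I*(I-1)*(I-2)*(K*(K-1)*(K-2)))*N^2*(N-1)*(N-3)"
  proof -
    have "(6 - 4*mu) * m3*((N-2)*(N-3))*D = (6*N-4*(mu*N))*(m3*(N*(N-1)*(N-2)))*N^2*(N-1)*(N-3)"
      unfolding D_def by (simp add: algebra_simps eval_nat_numeral)
    then show ?thesis unfolding e3 emu .
  qed
  have P2: "(7 - 12*mu + 6*mu^2) * m2*((N-2)*(N-3))*D = (7*N^2-12*(I*K)*N+6*(I*K)^2)*(I*(I-1)*(K*(K-1)))*N*(N-1)*(N-2)*(N-3)"
  proof -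
    have "(7 - 12*mu + 6*mu^2) * m2*((N-2)*(N-3))*D = (7*N^2-12*(mu*N)*N+6*(mu*N)^2)*(m2*(N*(N-1)))*N*(N-1)*(N-2)*(N-3)"
      unfolding D_def by (simp add: algebra_simps eval_nat_numeral)
    then show ?thesis unfolding e2 emu .
  qed
  have P1: "(1 - 4*mu + 6*mu^2 - 4*mu^3) * mu*((N-2)*(N-3))*D = (N^3-4*(I*K)*N^2+6*(I*K)^2*N-4*(I*K)^3)*(I*K)*(N-2)*(N-3)*(N-1)^2"
  proof -
    have "(1 - 4*mu + 6*mu^2 - 4*mu^3) * mu*((N-2)*(N-3))*D = (N^3-4*(mu*N)*N^2+6*(mu*N)^2*N-4*(mu*N)^3)*(mu*N)*(N-2)*(N-3)*(N-1)^2"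
      unfolding D_def by (simp add: algebra_simps eval_nat_numeral)
    then show ?thesis unfolding emu .
  qed
  have P0: "mu^4*((N-2)*(N-3))*D = (I*K)^4*(N-1)^2*(N-2)*(N-3)"
  proof -
    have "mu^4*((N-2)*(N-3))*D = (mu*N)^4*(N-1)^2*(N-2)*(N-3)"
      unfolding D_def by (simp add: algebra_simps eval_nat_numeral)
    then show ?thesis unfolding emu .
  qed
  have PR: "((3*N^2+15*N-18)*s^2 + (N^2+N-6*I*(N-I)-6*K*(N-K))*s) * D
     = (3*N^2+15*N-18)*(I*K*(N-I)*(N-K))^2 + (N^2+N-6*I*(N-I)-6*K*(N-K))*(I*K*(N-I)*(N-K))*N^2*(N-1)"
  proof -
    have "((3*N^2+15*N-18)*s^2 + (N^2+N-6*I*(N-I)-6*K*(N-K))*s) * D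
       = (3*N^2+15*N-18)*(s*(N^2*(N-1)))^2 + (N^2+N-6*I*(N-I)-6*K*(N-K))*(s*(N^2*(N-1)))*N^2*(N-1)"
      unfolding D_def by (simp add: algebra_simps eval_nat_numeral)
    then show ?thesis unfolding es .
  qed
  have "c4 * ((N-2)*(N-3)) * D = ((3*N^2+15*N-18)*s^2 + (N^2+N-6*I*(N-I)-6*K*(N-K))*s) * D"
  proof -
    have "c4 * ((N-2)*(N-3)) * D = m4*((N-2)*(N-3))*D + (6 - 4*mu) * m3*((N-2)*(N-3))*D
      + (7 - 12*mu + 6*mu^2) * m2*((N-2)*(N-3))*D + (1 - 4*mu + 6*mu^2 - 4*mu^3) * mu*((N-2)*(N-3))*D
      + mu^4*((N-2)*(N-3))*D"
      unfolding c4_def by (simp add: algebra_simps)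
    then show ?thesis unfolding P4 P3 P2 P1 P0 PR poly_identity .
  qed
  then show "c4 * ((N-2)*(N-3)) = (3*N^2+15*N-18)*s^2 + (N^2+N-6*I*(N-I)-6*K*(N-K))*s"
    using D0 by simp
qed



lemma kurt_bound:
  fixes N I K s c4 :: real
  assumes N4: "N \<ge> 4" and I0: "0 \<le> I" "I \<le> N" and K0: "0 \<le> K" "K \<le> N"
    and sdef: "s = I*K*(N-I)*(N-K) / (N^2*(N-1))" and s1: "s \<ge> 1"
    and c4e: "c4 * ((N-2)*(N-3)) = (3*N^2+15*N-18)*s^2 + (N^2+N-6*I*(N-I)-6*K*(N-K))*s"
  shows "c4 \<le> 8 * s^2"
proof -
  define A where "A = I*(N-I)"
  define B where "B = K*(N-K)"
  have A0: "A \<ge> 0" unfolding A_def using I0 by simp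
  have B0: "B \<ge> 0" unfolding B_def using K0 by simp
  have Au: "A \<le> N^2/4" unfolding A_def using sum_power2_ge_zero[of "N - 2*I" 0]
    by (simp add: power2_eq_square algebra_simps)
  have Bu: "B \<le> N^2/4" unfolding B_def using sum_power2_ge_zero[of "N - 2*K" 0]
    by (simp add: power2_eq_square algebra_simps)
  have NN: "N^2*(N-1) > 0" using N4 by simp
  have AB0: "s * (N^2*(N-1)) = I*K*(N-I)*(N-K)" using sdef NN N4 by simp
  have AB: "A*B = s * (N^2*(N-1))" unfolding AB0 A_def B_def by (simp add: mult_ac)
  have ABl: "A*B \<ge> N^2*(N-1)" unfolding AB using mult_right_mono[OF s1, of "N^2*(N-1)"] NN by simp
  have N2: "N^2 > 0" using N4 by simp
  have "A*B \<le> A*(N^2/4)" by (rule mult_left_mono[OF Bu A0])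
  hence "N^2*(N-1) \<le> A*(N^2/4)" using ABl by linarith
  hence "N^2*(4*(N-1)) \<le> N^2*A" by (simp add: algebra_simps)
  hence Al: "A \<ge> 4*(N-1)" using N2 by (simp add: mult_le_cancel_left_pos)
  have "A*B \<le> (N^2/4)*B" by (rule mult_right_mono[OF Au B0])
  hence "N^2*(N-1) \<le> (N^2/4)*B" using ABl by linarith
  hence "N^2*(4*(N-1)) \<le> N^2*B" by (simp add: algebra_simps)
  hence Bl: "B \<ge> 4*(N-1)" using N2 by (simp add: mult_le_cancel_left_pos)
  have "A*B \<le> (N^2/4)*(N^2/4)" by (rule mult_mono[OF Au Bu _ B0]) simp
  hence "N^2*(N-1) \<le> (N^2/4)*(N^2/4)" using ABl by linarith
  hence "N^2*(16*(N-1)) \<le> N^2*N^2" by (simp add: algebra_simps)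
  hence h16: "16*(N-1) \<le> N^2" using mult_le_cancel_left_pos[OF N2, of "16*(N-1)" "N^2"] by simp
  have N10: "N \<ge> 10"
  proof (rule ccontr)
    assume "\<not> N \<ge> 10"
    hence "(12-N)*(N-4) \<ge> 0" using N4 by simp
    then show False using h16 by (simp add: power2_eq_square algebra_simps)
  qed
  define D where "D = 5*N^2-55*N+66"
  have "(N-10)*(5*N-5) \<ge> 0" using N10 by simp
  hence D16: "D \<ge> 16" unfolding D_def by (simp add: algebra_simps power2_eq_square)
  have Xe: "N^2+N-6*I*(N-I)-6*K*(N-K) = N^2 + N - 6*A - 6*B" unfolding A_def B_def by (simp add: algebra_simps)
  have "N*N \<ge> 10*N" using N10 by (simp add: mult_right_mono)
  hence N2b: "N^2 \<ge> 10*N" by (simp add: power2_eq_square)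
  have X: "N^2+N-6*I*(N-I)-6*K*(N-K) \<le> D"
  proof -
    have h1: "6*A + 6*B \<ge> 48*N - 48" using Al Bl by (simp add: algebra_simps)
    have "N^2 + N - 6*A - 6*B \<le> 5*N^2 - 55*N + 66" using h1 N2b N10 by linarith
    then show ?thesis unfolding Xe D_def .
  qed
  have "D \<le> D * s" using D16 s1 by (simp add: mult_le_cancel_left1)
  hence "N^2+N-6*I*(N-I)-6*K*(N-K) \<le> D * s" using X by linarith
  hence "(N^2+N-6*I*(N-I)-6*K*(N-K))*s \<le> D*s*s" using s1 by (simp add: mult_right_mono)
  hence "c4 * ((N-2)*(N-3)) \<le> (3*N^2+15*N-18)*s^2 + D*s*s" using c4e by linarith
  also have "\<dots> = (8 * s^2) * ((N-2)*(N-3))" unfolding D_def by (simp add: algebra_simps power2_eq_square)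
  finally show ?thesis using N4 by (simp add: mult_le_cancel_right)
qed


lemma cert_pos:
  fixes y :: real
  assumes "0 \<le> y"
  shows "4/25*y + 1/10*y^2 - 1/160*y^4 \<le> 1"
proof -
  have e: "800 - 128*y - 80*y^2 + 5*y^4 = 5*(y^2-10)^2 + 20*(y-16/5)^2 + 476/5"
    by (simp add: algebra_simps power2_eq_square power4_eq_xxxx)
  have "0 \<le> 5*(y^2-10)^2 + 20*(y-16/5)^2 + 476/5" by simp
  hence "0 \<le> 800 - 128*y - 80*y^2 + 5*y^4" using e by simp
  then show ?thesis by simp
qed

lemma cert_neg:
  fixes y :: real
  assumes "y < 0"
  shows "4/25*y + 1/10*y^2 - 1/160*y^4 \<le> 0"
proof -
  define z where "z = -y"
  have z0: "z > 0" using assms unfolding z_def by simp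
  have e: "128 - 80*z + 5*z^3 = 5*z*(z-23/10)^2 + 23*(z - 2129/920)^2 + 177759/36800"
    by (simp add: algebra_simps power2_eq_square power3_eq_cube)
  have "0 \<le> 5*z*(z-23/10)^2" using z0 by simp
  hence g: "0 \<le> 128 - 80*z + 5*z^3" unfolding e by simp
  have "4/25*y + 1/10*y^2 - 1/160*y^4 = -(z * (128 - 80*z + 5*z^3)) / 800"
    unfolding z_def by (simp add: algebra_simps power2_eq_square power3_eq_cube power4_eq_xxxx)
  also have "\<dots> \<le> 0" using g z0 by simp
  finally show ?thesis .
qed


theorem corollary1:
  fixes n i k :: nat
  assumes "n \<ge> 4"
    and "i \<in> {1..n}" and "k \<in> {1..n}"
    and "1 \<le> hyp_mean n i k"
    and "hyp_mean n i k \<le> real (min i k) - 2"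
    and "real (n - i) * real (n - k) / real n > 1"
    and "hyp_var n i k \<ge> 1"
  shows "hyp_prob n i k (\<lambda>j. real j \<ge> hyp_mean n i k) \<ge> 0.049"
proof -
  have n4: "n \<ge> 4" and "i \<le> n" "k \<le> n" using assms(1-3) by auto
  note in_ = \<open>i \<le> n\<close> and kn = \<open>k \<le> n\<close>
  define N where "N = real n"
  define I where "I = real i"
  define K where "K = real k"
  define p where "p = hyp_pmf n i k"
  define mu where "mu = hyp_mean n i k"
  have N4: "N \<ge> 4" unfolding N_def using n4 by simp
  have mom: "\<And>r. (\<Sum>j\<le>k. real (ff j r) * p j) = real (ff i r) * real (ff k r) / real (ff n r)"
    unfolding p_def using hyp_ff_moment[OF in_ kn] by simp
  have m0: "(\<Sum>j\<le>k. p j) = 1"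
    using mom[of 0] by simp
  have m1: "(\<Sum>j\<le>k. real j * p j) = I * K / N"
    using mom[of 1] unfolding I_def K_def N_def by (simp add: ff_real_1)
  have mu_eq: "mu = I * K / N" unfolding mu_def hyp_mean_def using m1 p_def by simp
  have m2: "(\<Sum>j\<le>k. real (ff j 2) * p j) = I*(I-1)*(K*(K-1)) / (N*(N-1))"
    using mom[of 2] unfolding I_def K_def N_def by (simp add: ff_real_2 mult_ac)
  have m3: "(\<Sum>j\<le>k. real (ff j 3) * p j) = I*(I-1)*(I-2)*(K*(K-1)*(K-2)) / (N*(N-1)*(N-2))"
    using mom[of 3] unfolding I_def K_def N_def by (simp add: ff_real_3 mult_ac)
  have m4: "(\<Sum>j\<le>k. real (ff j 4) * p j) = I*(I-1)*(I-2)*(I-3)*(K*(K-1)*(K-2)*(K-3)) / (N*(N-1)*(N-2)*(N-3))"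
    using mom[of 4] unfolding I_def K_def N_def by (simp add: ff_real_4 mult_ac)
  define s where "s = hyp_var n i k"
  have s_eq: "s = I*(I-1)*(K*(K-1)) / (N*(N-1)) + (1 - 2*mu) * mu + mu^2"
  proof -
    have pw: "\<And>j. (real j - mu)^2 * p j = real (ff j 2) * p j + (1 - 2*mu) * (real j * p j) + mu^2 * p j"
      by (simp add: ff_real_2 algebra_simps power2_eq_square)
    have "s = (\<Sum>j\<le>k. (real j - mu)^2 * p j)" unfolding s_def hyp_var_def mu_def p_def ..
    also have "\<dots> = (\<Sum>j\<le>k. real (ff j 2) * p j) + (1 - 2*mu) * (\<Sum>j\<le>k. real j * p j) + mu^2 * (\<Sum>j\<le>k. p j)"
      unfolding pw by (simp add: sum.distrib sum_distrib_left)
    also have "\<dots> = I*(I-1)*(K*(K-1)) / (N*(N-1)) + (1 - 2*mu) * mu + mu^2"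
      unfolding m2 m1 m0 mu_eq by simp
    finally show ?thesis .
  qed
  define c4 where "c4 = (\<Sum>j\<le>k. (real j - mu)^4 * p j)"
  have c4_eq: "c4 = I*(I-1)*(I-2)*(I-3)*(K*(K-1)*(K-2)*(K-3)) / (N*(N-1)*(N-2)*(N-3))
     + (6 - 4*mu) * (I*(I-1)*(I-2)*(K*(K-1)*(K-2)) / (N*(N-1)*(N-2)))
     + (7 - 12*mu + 6*mu^2) * (I*(I-1)*(K*(K-1)) / (N*(N-1)))
     + (1 - 4*mu + 6*mu^2 - 4*mu^3) * mu + mu^4"
  proof -
    have pw: "\<And>j. (real j - mu)^4 * p j = real (ff j 4) * p j + (6 - 4*mu) * (real (ff j 3) * p j)
       + (7 - 12*mu + 6*mu^2) * (real (ff j 2) * p j) + (1 - 4*mu + 6*mu^2 - 4*mu^3) * (real j * p j) + mu^4 * p j"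
      by (simp only: ff_real_2 ff_real_3 ff_real_4) (simp add: algebra_simps eval_nat_numeral)
    have "c4 = (\<Sum>j\<le>k. real (ff j 4) * p j) + (6 - 4*mu) * (\<Sum>j\<le>k. real (ff j 3) * p j)
       + (7 - 12*mu + 6*mu^2) * (\<Sum>j\<le>k. real (ff j 2) * p j) + (1 - 4*mu + 6*mu^2 - 4*mu^3) * (\<Sum>j\<le>k. real j * p j) + mu^4 * (\<Sum>j\<le>k. p j)"
      unfolding c4_def pw by (simp add: sum.distrib sum_distrib_left)
    then show ?thesis unfolding m4 m3 m2 m1 m0 mu_eq by simp
  qed
  have ids: "s = I*K*(N-I)*(N-K) / (N^2*(N-1))"
     "c4 * ((N-2)*(N-3)) = (3*N^2+15*N-18)*s^2 + (N^2+N-6*I*(N-I)-6*K*(N-K))*s"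
    using moment_identity[OF N4, of I K] unfolding s_eq c4_eq mu_eq by simp_all
  have s1: "s \<ge> 1" unfolding s_def using assms(7) .
  have c4b: "c4 \<le> 8 * s^2"
    apply (rule kurt_bound[OF N4 _ _ _ _ ids(1) s1 ids(2)])
    using in_ kn unfolding I_def K_def N_def by simp_all
  define sg where "sg = sqrt s"
  have sg0: "sg > 0" unfolding sg_def using s1 by simp
  have sg2: "sg^2 = s" unfolding sg_def using s1 by simp
  have sg4: "sg^4 = s^2" using sg2 by (metis power_mult numeral_Bit0 mult_2_right power2_eq_square semiring_norm(5) power_even_eq)
  define f where "f = (\<lambda>y::real. 4/25*y + 1/10*y^2 - 1/160*y^4)"
  have p0: "\<And>j. p j \<ge> 0" unfolding p_def hyp_pmf_def by simp
  have c1: "(\<Sum>j\<le>k. (real j - mu) * p j) = 0"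
  proof -
    have "(\<Sum>j\<le>k. (real j - mu) * p j) = (\<Sum>j\<le>k. real j * p j) - mu * (\<Sum>j\<le>k. p j)"
      by (simp add: algebra_simps sum_subtractf sum_distrib_left)
    then show ?thesis unfolding m1 m0 mu_eq by simp
  qed
  have c2: "(\<Sum>j\<le>k. (real j - mu)^2 * p j) = s" unfolding s_def hyp_var_def mu_def p_def ..
  have pwf: "\<And>j. p j * f ((real j - mu) / sg) = 4/25/sg * ((real j - mu) * p j) + 1/(10*s) * ((real j - mu)^2 * p j) - 1/(160*s^2) * ((real j - mu)^4 * p j)"
    unfolding f_def using sg0 sg2 sg4 by (simp add: power_divide field_simps)
  have "(\<Sum>j\<le>k. p j * f ((real j - mu) / sg)) = 4/25/sg * 0 + 1/(10*s) * s - 1/(160*s^2) * c4"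
    unfolding pwf sum_subtractf sum.distrib sum_distrib_left[symmetric] c1 c2 c4_def ..
  also have "\<dots> = 1/10 - c4/(160*s^2)" using s1 by simp
  also have "\<dots> \<ge> 1/10 - 8*s^2/(160*s^2)"
    using c4b s1 by (simp add: divide_right_mono)
  finally have lower: "(\<Sum>j\<le>k. p j * f ((real j - mu) / sg)) \<ge> 1/20" using s1 by simp
  have "(\<Sum>j\<le>k. p j * f ((real j - mu) / sg)) \<le> (\<Sum>j\<le>k. if mu \<le> real j then p j else 0)"
  proof (rule sum_mono)
    fix j assume "j \<in> {..k}"
    show "p j * f ((real j - mu) / sg) \<le> (if mu \<le> real j then p j else 0)"
    proof (cases "mu \<le> real j")
      case True
      hence "0 \<le> (real j - mu) / sg" using sg0 by simp
      hence "f ((real j - mu) / sg) \<le> 1" unfolding f_def by (rule cert_pos)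
      then show ?thesis using True p0[of j] by (simp add: mult_left_le)
    next
      case False
      hence "(real j - mu) / sg < 0" using sg0 by (simp add: divide_neg_pos)
      hence "f ((real j - mu) / sg) \<le> 0" unfolding f_def by (rule cert_neg)
      then show ?thesis using False p0[of j] by (simp add: mult_nonneg_nonpos)
    qed
  qed
  also have "\<dots> = hyp_prob n i k (\<lambda>j. real j \<ge> hyp_mean n i k)"
  proof -
    have "hyp_prob n i k (\<lambda>j. real j \<ge> hyp_mean n i k) = sum p {j \<in> {..k}. mu \<le> real j}"
      unfolding hyp_prob_def p_def mu_def by (rule sum.cong) auto
    also have "\<dots> = (\<Sum>j\<le>k. if mu \<le> real j then p j else 0)" by (rule sum.inter_filter) simp
    finally show ?thesis by simp
  qed
  finally show ?thesis using lower by simp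
qed

end
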